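(* Assume (FS), let $E$ be a small subset of $\mathfrak C$ and $p\in S(E)$. The following are equivalent: (1) $p$ is $\operatorname{acl}$-stationary, i.e. $p$ has a unique extension to a complete type over $\operatorname{acl}(E)$; (2) $E\subseteq\operatorname{dcl}(Ea)$ is primary for some $a\models p$; (3) $E\subseteq\operatorname{dcl}(Ea)$ is primary for every $a\models p$.
   Context: $L$ is a first-order language, $T$ a complete $L$-theory, $\mathfrak C$ a monster model of $T$; $\operatorname{acl}$, $\operatorname{dcl}$ are computed in $\mathfrak C$. (FS): $T$ codes finite sets, i.e. every finite set of real tuples has a code which is a real tuple. For small $F\subseteq K$, the extension $F\subseteq K$ is primary if $\operatorname{dcl}(K)\cap\operatorname{acl}(F)=\operatorname{dcl}(F)$. *)

theory Defs
  imports Main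
begin

text \<open>Terms/formulas may contain parameters (elements of the
monster model, type 'a); an L(A)-formula is one whose parameters lie in A.\<close>

datatype ('f,'a) trm = Var nat | Par 'a | Fn 'f "('f,'a) trm list"

datatype ('f,'r,'a) fm =
    Eq "('f,'a) trm" "('f,'a) trm"
  | Rel 'r "('f,'a) trm list"
  | Neg "('f,'r,'a) fm"
  | Conj "('f,'r,'a) fm" "('f,'r,'a) fm"
  | Ex nat "('f,'r,'a) fm"

type_synonym ('f,'r) lang = "('f \<Rightarrow> nat) \<times> ('r \<Rightarrow> nat)"
text \<open>A structure whose universe is the whole type 'a.\<close>
type_synonym ('f,'r,'a) struc = "('f \<Rightarrow> 'a list \<Rightarrow> 'a) \<times> ('r \<Rightarrow> 'a list \<Rightarrow> bool)"

fun wft :: "('f \<Rightarrow> nat) \<Rightarrow> ('f,'a) trm \<Rightarrow> bool" where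
  "wft fa (Var i) = True"
| "wft fa (Par c) = True"
| "wft fa (Fn f ts) = (length ts = fa f \<and> (\<forall>t\<in>set ts. wft fa t))"

fun wff :: "('f,'r) lang \<Rightarrow> ('f,'r,'a) fm \<Rightarrow> bool" where
  "wff L (Eq s t) = (wft (fst L) s \<and> wft (fst L) t)"
| "wff L (Rel r ts) = (length ts = snd L r \<and> (\<forall>t\<in>set ts. wft (fst L) t))"
| "wff L (Neg \<phi>) = wff L \<phi>"
| "wff L (Conj \<phi> \<psi>) = (wff L \<phi> \<and> wff L \<psi>)"
| "wff L (Ex x \<phi>) = wff L \<phi>"

fun frees_t :: "('f,'a) trm \<Rightarrow> nat set" where
  "frees_t (Var i) = {i}"
| "frees_t (Par c) = {}"
| "frees_t (Fn f ts) = (\<Union>t\<in>set ts. frees_t t)"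

fun params_t :: "('f,'a) trm \<Rightarrow> 'a set" where
  "params_t (Var i) = {}"
| "params_t (Par c) = {c}"
| "params_t (Fn f ts) = (\<Union>t\<in>set ts. params_t t)"

fun frees :: "('f,'r,'a) fm \<Rightarrow> nat set" where
  "frees (Eq s t) = frees_t s \<union> frees_t t"
| "frees (Rel r ts) = (\<Union>t\<in>set ts. frees_t t)"
| "frees (Neg \<phi>) = frees \<phi>"
| "frees (Conj \<phi> \<psi>) = frees \<phi> \<union> frees \<psi>"
| "frees (Ex x \<phi>) = frees \<phi> - {x}"

fun params :: "('f,'r,'a) fm \<Rightarrow> 'a set" where
  "params (Eq s t) = params_t s \<union> params_t t"
| "params (Rel r ts) = (\<Union>t\<in>set ts. params_t t)"
| "params (Neg \<phi>) = params \<phi>"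
| "params (Conj \<phi> \<psi>) = params \<phi> \<union> params \<psi>"
| "params (Ex x \<phi>) = params \<phi>"

fun evalt :: "('f \<Rightarrow> 'a list \<Rightarrow> 'a) \<Rightarrow> (nat \<Rightarrow> 'a) \<Rightarrow> ('f,'a) trm \<Rightarrow> 'a" where
  "evalt F v (Var i) = v i"
| "evalt F v (Par c) = c"
| "evalt F v (Fn f ts) = F f (map (evalt F v) ts)"

fun sat :: "('f,'r,'a) struc \<Rightarrow> (nat \<Rightarrow> 'a) \<Rightarrow> ('f,'r,'a) fm \<Rightarrow> bool" where
  "sat M v (Eq s t) = (evalt (fst M) v s = evalt (fst M) v t)"
| "sat M v (Rel r ts) = snd M r (map (evalt (fst M) v) ts)"
| "sat M v (Neg \<phi>) = (\<not> sat M v \<phi>)"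
| "sat M v (Conj \<phi> \<psi>) = (sat M v \<phi> \<and> sat M v \<psi>)"
| "sat M v (Ex x \<phi>) = (\<exists>b. sat M (v(x := b)) \<phi>)"

definition Lfm :: "('f,'r) lang \<Rightarrow> 'a set \<Rightarrow> nat \<Rightarrow> ('f,'r,'a) fm \<Rightarrow> bool" where
  "Lfm L A n \<phi> \<longleftrightarrow> wff L \<phi> \<and> params \<phi> \<subseteq> A \<and> frees \<phi> \<subseteq> {..<n}"

definition satT :: "('f,'r,'a) struc \<Rightarrow> 'a list \<Rightarrow> ('f,'r,'a) fm \<Rightarrow> bool" where
  "satT M a \<phi> \<longleftrightarrow> sat M (\<lambda>i. a ! i) \<phi>"

definition realizes :: "('f,'r,'a) struc \<Rightarrow> 'a list \<Rightarrow> ('f,'r,'a) fm set \<Rightarrow> bool" where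
  "realizes M a p \<longleftrightarrow> (\<forall>\<phi>\<in>p. satT M a \<phi>)"

text \<open>Complete n-types over A (S_n(A)): complete sets of L(A)-formulas
consistent with Th(C_A), i.e. finitely satisfiable in C.\<close>
definition ctype :: "('f,'r) lang \<Rightarrow> ('f,'r,'a) struc \<Rightarrow> 'a set \<Rightarrow> nat \<Rightarrow> ('f,'r,'a) fm set \<Rightarrow> bool" where
  "ctype L M A n p \<longleftrightarrow>
     (\<forall>\<phi>\<in>p. Lfm L A n \<phi>) \<and>
     (\<forall>Q. finite Q \<and> Q \<subseteq> p \<longrightarrow> (\<exists>a. length a = n \<and> realizes M a Q)) \<and>
     (\<forall>\<phi>. Lfm L A n \<phi> \<longrightarrow> \<phi> \<in> p \<or> Neg \<phi> \<in> p)"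

definition dcl :: "('f,'r) lang \<Rightarrow> ('f,'r,'a) struc \<Rightarrow> 'a set \<Rightarrow> 'a set" where
  "dcl L M A = {b. \<exists>\<phi>. Lfm L A 1 \<phi> \<and> {c. satT M [c] \<phi>} = {b}}"

definition acl :: "('f,'r) lang \<Rightarrow> ('f,'r,'a) struc \<Rightarrow> 'a set \<Rightarrow> 'a set" where
  "acl L M A = {b. \<exists>\<phi>. Lfm L A 1 \<phi> \<and> finite {c. satT M [c] \<phi>} \<and> b \<in> {c. satT M [c] \<phi>}}"

definition automorphism :: "('f,'r) lang \<Rightarrow> ('f,'r,'a) struc \<Rightarrow> ('a \<Rightarrow> 'a) \<Rightarrow> bool" where
  "automorphism L M \<sigma> \<longleftrightarrow> bij \<sigma> \<and>
     (\<forall>f xs. length xs = fst L f \<longrightarrow> \<sigma> (fst M f xs) = fst M f (map \<sigma> xs)) \<and>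
     (\<forall>r xs. length xs = snd L r \<longrightarrow> (snd M r (map \<sigma> xs) \<longleftrightarrow> snd M r xs))"

definition is_code :: "('f,'r) lang \<Rightarrow> ('f,'r,'a) struc \<Rightarrow> 'a list \<Rightarrow> 'a list set \<Rightarrow> bool" where
  "is_code L M c S \<longleftrightarrow>
     (\<forall>\<sigma>. automorphism L M \<sigma> \<longrightarrow> (map \<sigma> ` S = S \<longleftrightarrow> map \<sigma> c = c))"

definition FS :: "('f,'r) lang \<Rightarrow> ('f,'r,'a) struc \<Rightarrow> bool" where
  "FS L M \<longleftrightarrow> (\<forall>n S. finite S \<and> (\<forall>s\<in>S. length s = n) \<longrightarrow> (\<exists>c. is_code L M c S))"

definition small :: "'k rel \<Rightarrow> 'a set \<Rightarrow> bool" where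
  "small \<kappa> A \<longleftrightarrow> (card_of A, \<kappa>) \<in> ordLess"

text \<open>Monster model: kappa-saturated and strongly kappa-homogeneous, kappa an
infinite cardinal bigger than the language.\<close>
definition monster :: "('f,'r) lang \<Rightarrow> ('f,'r,'a) struc \<Rightarrow> 'k rel \<Rightarrow> bool" where
  "monster L M \<kappa> \<longleftrightarrow>
     Card_order \<kappa> \<and> infinite (Field \<kappa>) \<and>
     small \<kappa> (UNIV :: 'f set) \<and> small \<kappa> (UNIV :: 'r set) \<and>
     (\<forall>A n p. small \<kappa> A \<and> ctype L M A n p \<longrightarrow> (\<exists>a. length a = n \<and> realizes M a p)) \<and>
     (\<forall>A g. small \<kappa> A \<and>
        (\<forall>\<phi> a. set a \<subseteq> A \<and> Lfm L {} (length a) \<phi> \<longrightarrow> (satT M a \<phi> \<longleftrightarrow> satT M (map g a) \<phi>))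
        \<longrightarrow> (\<exists>\<sigma>. automorphism L M \<sigma> \<and> (\<forall>x\<in>A. \<sigma> x = g x)))"

definition primary :: "('f,'r) lang \<Rightarrow> ('f,'r,'a) struc \<Rightarrow> 'a set \<Rightarrow> 'a set \<Rightarrow> bool" where
  "primary L M F K \<longleftrightarrow> F \<subseteq> K \<and> dcl L M K \<inter> acl L M F = dcl L M F"

definition acl_stationary :: "('f,'r) lang \<Rightarrow> ('f,'r,'a) struc \<Rightarrow> 'a set \<Rightarrow> nat \<Rightarrow> ('f,'r,'a) fm set \<Rightarrow> bool" where
  "acl_stationary L M E n p \<longleftrightarrow> (\<exists>!q. ctype L M (acl L M E) n q \<and> p \<subseteq> q)"

end

theory Submission
  imports Defs
begin

lemma small_finite:
  assumes "Card_order k" "infinite (Field k)" "finite B" shows "small k B"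
proof -
  have "(card_of B, card_of (Field k)) \<in> ordLess"
    using assms by (meson card_of_Well_order card_of_ordLeq_finite not_ordLeq_iff_ordLess)
  thus ?thesis unfolding small_def using card_of_Field_ordIso[OF assms(1)] ordLess_ordIso_trans by blast
qed

lemma small_Un:
  assumes "Card_order k" "infinite (Field k)" "small k A" "small k B" shows "small k (A \<union> B)"
  using assms card_of_Un_ordLess_infinite_Field unfolding small_def by blast

lemma small_Un_fin:
  assumes "Card_order k" "infinite (Field k)" "small k A" "finite B" shows "small k (A \<union> B)"
  using assms small_Un small_finite by blast

lemma small_mono: "small k B \<Longrightarrow> A \<subseteq> B \<Longrightarrow> small k A"
  unfolding small_def using card_of_mono1 ordLeq_ordLess_trans by blast


lemma finite_frees_t: "finite (frees_t t)"
  by (induction t) auto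
lemma finite_frees: "finite (frees \<phi>)"
  by (induction \<phi>) (auto simp: finite_frees_t)
lemma finite_params_t: "finite (params_t t)"
  by (induction t) auto
lemma finite_params: "finite (params \<phi>)"
  by (induction \<phi>) (auto simp: finite_params_t)

lemma evalt_agree: "(\<forall>i\<in>frees_t t. v i = w i) \<Longrightarrow> evalt F v t = evalt F w t"
proof (induction t)
  case (Fn f ts)
  hence "map (evalt F v) ts = map (evalt F w) ts" by auto
  thus ?case by (metis evalt.simps(3))
qed auto

lemma sat_agree: "(\<forall>i\<in>frees \<phi>. v i = w i) \<Longrightarrow> sat M v \<phi> = sat M w \<phi>"
proof (induction \<phi> arbitrary: v w)
  case (Eq s t) thus ?case using evalt_agree[of s v w] evalt_agree[of t v w] by auto
next
  case (Rel r ts)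
  have "map (evalt (fst M) v) ts = map (evalt (fst M) w) ts"
    using Rel evalt_agree by fastforce
  thus ?case by (metis sat.simps(2))
next
  case (Conj a b)
  have "sat M v a = sat M w a" "sat M v b = sat M w b" using Conj by auto
  thus ?case by simp
next
  case (Ex x \<phi>)
  have "\<And>b. sat M (v(x:=b)) \<phi> = sat M (w(x:=b)) \<phi>"
    using Ex.IH Ex.prems by auto
  thus ?case by simp
qed auto

fun mt :: "('a \<Rightarrow> 'a) \<Rightarrow> ('f,'a) trm \<Rightarrow> ('f,'a) trm" where
  "mt \<sigma> (Var i) = Var i"
| "mt \<sigma> (Par c) = Par (\<sigma> c)"
| "mt \<sigma> (Fn f ts) = Fn f (map (mt \<sigma>) ts)"

fun mf :: "('a \<Rightarrow> 'a) \<Rightarrow> ('f,'r,'a) fm \<Rightarrow> ('f,'r,'a) fm" where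
  "mf \<sigma> (Eq s t) = Eq (mt \<sigma> s) (mt \<sigma> t)"
| "mf \<sigma> (Rel r ts) = Rel r (map (mt \<sigma>) ts)"
| "mf \<sigma> (Neg \<phi>) = Neg (mf \<sigma> \<phi>)"
| "mf \<sigma> (Conj \<phi> \<psi>) = Conj (mf \<sigma> \<phi>) (mf \<sigma> \<psi>)"
| "mf \<sigma> (Ex x \<phi>) = Ex x (mf \<sigma> \<phi>)"

lemma mt_wft: "wft fa (mt \<sigma> t) = wft fa t" by (induction t) auto
lemma mf_wff: "wff L (mf \<sigma> \<phi>) = wff L \<phi>" by (induction \<phi>) (auto simp: mt_wft)
lemma mt_frees: "frees_t (mt \<sigma> t) = frees_t t" by (induction t) auto
lemma mf_frees: "frees (mf \<sigma> \<phi>) = frees \<phi>" by (induction \<phi>) (auto simp: mt_frees)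
lemma mt_params: "params_t (mt \<sigma> t) = \<sigma> ` params_t t" by (induction t) auto
lemma mf_params: "params (mf \<sigma> \<phi>) = \<sigma> ` params \<phi>" by (induction \<phi>) (auto simp: mt_params)
lemma mt_comp0: "mt \<sigma> (mt \<tau> t) = mt (\<lambda>x. \<sigma> (\<tau> x)) t" by (induction t) auto
lemma mt_comp: "mt \<sigma> (mt \<tau> t) = mt (\<sigma> \<circ> \<tau>) t" by (simp add: mt_comp0 comp_def)
lemma mf_comp0: "mf \<sigma> (mf \<tau> \<phi>) = mf (\<lambda>x. \<sigma> (\<tau> x)) \<phi>" by (induction \<phi>) (auto simp: mt_comp0)
lemma mf_comp: "mf \<sigma> (mf \<tau> \<phi>) = mf (\<sigma> \<circ> \<tau>) \<phi>" by (simp add: mf_comp0 comp_def)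
lemma mt_cong: "(\<forall>x\<in>params_t t. \<sigma> x = \<tau> x) \<Longrightarrow> mt \<sigma> t = mt \<tau> t" by (induction t) auto
lemma mf_cong: "(\<forall>x\<in>params \<phi>. \<sigma> x = \<tau> x) \<Longrightarrow> mf \<sigma> \<phi> = mf \<tau> \<phi>"
  by (induction \<phi>) (auto intro: mt_cong)
lemma mf_id: "(\<forall>x\<in>params \<phi>. \<sigma> x = x) \<Longrightarrow> mf \<sigma> \<phi> = \<phi>"
proof -
  assume "\<forall>x\<in>params \<phi>. \<sigma> x = x"
  hence "mf \<sigma> \<phi> = mf id \<phi>" by (intro mf_cong) auto
  also have "mf id \<phi> = \<phi>"
  proof -
    have "\<And>t::('f,'a) trm. mt id t = t" subgoal for t by (induction t) (auto simp: map_idI) done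
    thus ?thesis by (induction \<phi>) (auto simp: map_idI)
  qed
  finally show ?thesis .
qed

lemma aut_evalt:
  assumes "automorphism L M \<sigma>" "wft (fst L) t"
  shows "\<sigma> (evalt (fst M) v t) = evalt (fst M) (\<lambda>i. \<sigma> (v i)) (mt \<sigma> t)"
  using assms(2)
proof (induction t)
  case (Fn f ts)
  have "\<sigma> (fst M f (map (evalt (fst M) v) ts)) = fst M f (map \<sigma> (map (evalt (fst M) v) ts))"
    using assms(1) Fn.prems unfolding automorphism_def by auto
  also have "map \<sigma> (map (evalt (fst M) v) ts) = map (evalt (fst M) (\<lambda>i. \<sigma> (v i)) \<circ> mt \<sigma>) ts"
    using Fn by (auto simp: comp_def)
  finally show ?case by simp
qed auto

lemma aut_sat:
  assumes "automorphism L M \<sigma>" "wff L \<phi>"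
  shows "sat M (\<lambda>i. \<sigma> (v i)) (mf \<sigma> \<phi>) = sat M v \<phi>"
  using assms(2)
proof (induction \<phi> arbitrary: v)
  case (Eq s t)
  have "bij \<sigma>" using assms(1) unfolding automorphism_def by blast
  hence "inj \<sigma>" by (simp add: bij_is_inj)
  have hs: "\<sigma> (evalt (fst M) v s) = evalt (fst M) (\<lambda>i. \<sigma> (v i)) (mt \<sigma> s)"
    using Eq aut_evalt[OF assms(1), where t=s and v=v] by simp
  have ht: "\<sigma> (evalt (fst M) v t) = evalt (fst M) (\<lambda>i. \<sigma> (v i)) (mt \<sigma> t)"
    using Eq aut_evalt[OF assms(1), where t=t and v=v] by simp
  have "sat M (\<lambda>i. \<sigma> (v i)) (mf \<sigma> (Eq s t)) = (\<sigma> (evalt (fst M) v s) = \<sigma> (evalt (fst M) v t))"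
    by (simp only: hs ht mf.simps sat.simps)
  thus ?case using \<open>inj \<sigma>\<close> by (simp add: inj_eq)
next
  case (Rel r ts)
  have "sat M (\<lambda>i. \<sigma> (v i)) (mf \<sigma> (Rel r ts)) = snd M r (map (evalt (fst M) (\<lambda>i. \<sigma> (v i))) (map (mt \<sigma>) ts))"
    by (simp del: map_map)
  also have "map (evalt (fst M) (\<lambda>i. \<sigma> (v i))) (map (mt \<sigma>) ts) = map \<sigma> (map (evalt (fst M) v) ts)"
    unfolding map_map using Rel aut_evalt[OF assms(1)] by (auto simp del: map_map)
  also have "snd M r (map \<sigma> (map (evalt (fst M) v) ts)) = snd M r (map (evalt (fst M) v) ts)"
    using assms(1) Rel.prems unfolding automorphism_def by (simp del: map_map)
  also have "\<dots> = sat M v (Rel r ts)" by simp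
  finally show ?case .
next
  case (Ex x \<phi>)
  have "bij \<sigma>" using assms(1) unfolding automorphism_def by blast
  hence sj: "surj \<sigma>" by (rule bij_is_surj)
  have wf: "wff L \<phi>" using Ex.prems by simp
  note IH = Ex.IH[OF wf]
  have "(\<exists>b. sat M ((\<lambda>i. \<sigma> (v i))(x := b)) (mf \<sigma> \<phi>)) = (\<exists>b. sat M (v(x := b)) \<phi>)"
  proof
    assume "\<exists>b. sat M ((\<lambda>i. \<sigma> (v i))(x := b)) (mf \<sigma> \<phi>)"
    then obtain b where hb: "sat M ((\<lambda>i. \<sigma> (v i))(x := b)) (mf \<sigma> \<phi>)" by blast
    obtain b' where b': "b = \<sigma> b'" using surjD[OF sj] by blast
    have eq: "(\<lambda>i. \<sigma> (v i))(x := b) = (\<lambda>i. \<sigma> ((v(x:=b')) i))" using b' by (simp add: fun_eq_iff)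
    have "sat M (\<lambda>i. \<sigma> ((v(x:=b')) i)) (mf \<sigma> \<phi>)" using hb unfolding eq .
    hence "sat M (v(x:=b')) \<phi>" using IH[of "v(x:=b')"] by blast
    thus "\<exists>b. sat M (v(x := b)) \<phi>" by blast
  next
    assume "\<exists>b. sat M (v(x := b)) \<phi>"
    then obtain b where hb: "sat M (v(x := b)) \<phi>" by blast
    have eq: "(\<lambda>i. \<sigma> (v i))(x := \<sigma> b) = (\<lambda>i. \<sigma> ((v(x:=b)) i))" by (simp add: fun_eq_iff)
    have "sat M (\<lambda>i. \<sigma> ((v(x:=b)) i)) (mf \<sigma> \<phi>)" using hb IH[of "v(x:=b)"] by blast
    hence "sat M ((\<lambda>i. \<sigma> (v i))(x := \<sigma> b)) (mf \<sigma> \<phi>)" unfolding eq .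
    thus "\<exists>b. sat M ((\<lambda>i. \<sigma> (v i))(x := b)) (mf \<sigma> \<phi>)" by blast
  qed
  thus ?case unfolding mf.simps sat.simps .
next
  case (Conj a b)
  thus ?case by simp
next
  case (Neg a)
  thus ?case by simp
qed

lemma satT_map:
  assumes "frees \<phi> \<subseteq> {..<length a}"
  shows "satT M (map \<sigma> a) \<phi> = sat M (\<lambda>i. \<sigma> (a ! i)) \<phi>"
  unfolding satT_def using assms by (intro sat_agree) auto

lemma aut_satT:
  assumes "automorphism L M \<sigma>" "wff L \<phi>" "frees \<phi> \<subseteq> {..<length a}"
  shows "satT M (map \<sigma> a) (mf \<sigma> \<phi>) = satT M a \<phi>"
  using satT_map[where \<phi>="mf \<sigma> \<phi>" and a=a and \<sigma>=\<sigma> and M=M] assms aut_sat[OF assms(1,2)] by (simp add: mf_frees satT_def)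

lemma aut_satT_fix:
  assumes "automorphism L M \<sigma>" "Lfm L A (length a) \<phi>" "\<forall>x\<in>A. \<sigma> x = x"
  shows "satT M (map \<sigma> a) \<phi> = satT M a \<phi>"
proof -
  have "mf \<sigma> \<phi> = \<phi>" using assms by (intro mf_id) (auto simp: Lfm_def)
  thus ?thesis using aut_satT[OF assms(1)] assms(2) by (metis Lfm_def)
qed

lemma aut_id: "automorphism L M id"
  unfolding automorphism_def by auto

lemma aut_comp:
  fixes \<sigma> \<tau> :: "'a \<Rightarrow> 'a" and M :: "('f,'r,'a) struc"
  assumes "automorphism L M \<sigma>" "automorphism L M \<tau>"
  shows "automorphism L M (\<sigma> \<circ> \<tau>)"
  unfolding automorphism_def
proof (intro conjI allI impI)
  show "bij (\<sigma> \<circ> \<tau>)" using assms by (auto simp: automorphism_def bij_comp)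
  fix f and xs :: "'a list" assume l: "length xs = fst L f"
  have "\<tau> (fst M f xs) = fst M f (map \<tau> xs)" using assms(2) l unfolding automorphism_def by blast
  moreover have "\<sigma> (fst M f (map \<tau> xs)) = fst M f (map \<sigma> (map \<tau> xs))"
    using assms(1) l unfolding automorphism_def by simp
  ultimately show "(\<sigma> \<circ> \<tau>) (fst M f xs) = fst M f (map (\<sigma> \<circ> \<tau>) xs)" by simp
next
  fix r and xs :: "'a list" assume l: "length xs = snd L r"
  have "snd M r (map \<tau> xs) = snd M r xs" using assms(2) l unfolding automorphism_def by blast
  moreover have "snd M r (map \<sigma> (map \<tau> xs)) = snd M r (map \<tau> xs)"
    using assms(1) l unfolding automorphism_def by (simp del: map_map)
  ultimately show "snd M r (map (\<sigma> \<circ> \<tau>) xs) = snd M r xs" by simp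
qed

lemma aut_inv:
  fixes \<sigma> :: "'a \<Rightarrow> 'a" and M :: "('f,'r,'a) struc"
  assumes "automorphism L M \<sigma>"
  shows "automorphism L M (inv \<sigma>)"
proof -
  have b: "bij \<sigma>" using assms unfolding automorphism_def by blast
  have ii: "\<And>x. inv \<sigma> (\<sigma> x) = x" "\<And>x. \<sigma> (inv \<sigma> x) = x"
    using b by (auto simp: bij_def surj_f_inv_f)
  have mi: "\<And>xs::'a list. map \<sigma> (map (inv \<sigma>) xs) = xs" using ii by (simp add: map_idI)
  show ?thesis unfolding automorphism_def
  proof (intro conjI allI impI)
    show "bij (inv \<sigma>)" using b bij_imp_bij_inv by blast
    fix f and xs :: "'a list" assume l: "length xs = fst L f"
    have "\<sigma> (fst M f (map (inv \<sigma>) xs)) = fst M f (map \<sigma> (map (inv \<sigma>) xs))"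
      using assms l unfolding automorphism_def by simp
    hence "\<sigma> (fst M f (map (inv \<sigma>) xs)) = fst M f xs" using mi by simp
    hence "inv \<sigma> (\<sigma> (fst M f (map (inv \<sigma>) xs))) = inv \<sigma> (fst M f xs)" by simp
    thus "inv \<sigma> (fst M f xs) = fst M f (map (inv \<sigma>) xs)" using ii by simp
  next
    fix r and xs :: "'a list" assume l: "length xs = snd L r"
    have "snd M r (map \<sigma> (map (inv \<sigma>) xs)) = snd M r (map (inv \<sigma>) xs)"
      using assms l unfolding automorphism_def by (simp del: map_map)
    thus "snd M r (map (inv \<sigma>) xs) = snd M r xs" using mi by simp
  qed
qed

definition fresh :: "nat set \<Rightarrow> nat" where "fresh S = (SOME z. z \<notin> S)"
lemma fresh: "finite S \<Longrightarrow> fresh S \<notin> S"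
  unfolding fresh_def using ex_new_if_finite[OF infinite_UNIV_nat] by (metis someI_ex)

fun substt :: "(nat \<Rightarrow> ('f,'a) trm) \<Rightarrow> ('f,'a) trm \<Rightarrow> ('f,'a) trm" where
  "substt s (Var i) = s i"
| "substt s (Par c) = Par c"
| "substt s (Fn f ts) = Fn f (map (substt s) ts)"

fun subst :: "(nat \<Rightarrow> ('f,'a) trm) \<Rightarrow> ('f,'r,'a) fm \<Rightarrow> ('f,'r,'a) fm" where
  "subst s (Eq a b) = Eq (substt s a) (substt s b)"
| "subst s (Rel r ts) = Rel r (map (substt s) ts)"
| "subst s (Neg \<phi>) = Neg (subst s \<phi>)"
| "subst s (Conj \<phi> \<psi>) = Conj (subst s \<phi>) (subst s \<psi>)"
| "subst s (Ex x \<phi>) = (let z = fresh (\<Union>y\<in>frees \<phi> - {x}. frees_t (s y)) in Ex z (subst (s(x:=Var z)) \<phi>))"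

lemma evalt_substt: "evalt F v (substt s t) = evalt F (\<lambda>i. evalt F v (s i)) t"
proof (induction t)
  case (Fn f ts)
  hence "map (evalt F v \<circ> substt s) ts = map (evalt F (\<lambda>i. evalt F v (s i))) ts" by auto
  thus ?case by (simp del: map_eq_conv)
qed auto

lemma sat_subst: "sat M v (subst s \<phi>) = sat M (\<lambda>i. evalt (fst M) v (s i)) \<phi>"
proof (induction \<phi> arbitrary: s v)
  case (Eq a b) thus ?case by (simp add: evalt_substt)
next
  case (Rel r ts)
  have "map (evalt (fst M) v \<circ> substt s) ts = map (evalt (fst M) (\<lambda>i. evalt (fst M) v (s i))) ts"
    by (auto simp: evalt_substt)
  thus ?case by (simp del: map_eq_conv)
next
  case (Ex x \<phi>)
  define S where "S = (\<Union>y\<in>frees \<phi> - {x}. frees_t (s y))"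
  define z where "z = fresh S"
  have fS: "finite S" unfolding S_def using finite_frees finite_frees_t by blast
  have zS: "z \<notin> S" using fresh[OF fS] z_def by simp
  have "subst s (Ex x \<phi>) = Ex z (subst (s(x:=Var z)) \<phi>)" by (simp add: S_def z_def Let_def)
  hence "sat M v (subst s (Ex x \<phi>)) = (\<exists>b. sat M (v(z:=b)) (subst (s(x:=Var z)) \<phi>))"
    by simp
  also have "\<dots> = (\<exists>b. sat M (\<lambda>i. evalt (fst M) (v(z:=b)) ((s(x:=Var z)) i)) \<phi>)"
    by (simp only: Ex.IH)
  also have "\<dots> = (\<exists>b. sat M ((\<lambda>i. evalt (fst M) v (s i))(x:=b)) \<phi>)"
  proof -
    have "\<And>b. sat M (\<lambda>i. evalt (fst M) (v(z:=b)) ((s(x:=Var z)) i)) \<phi> = sat M ((\<lambda>i. evalt (fst M) v (s i))(x:=b)) \<phi>"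
    proof (rule sat_agree, intro ballI)
      fix b i assume i: "i \<in> frees \<phi>"
      show "evalt (fst M) (v(z := b)) ((s(x := Var z)) i) = ((\<lambda>i. evalt (fst M) v (s i))(x := b)) i"
      proof (cases "i = x")
        case False
        hence "z \<notin> frees_t (s i)" using zS i unfolding S_def by blast
        hence "evalt (fst M) (v(z := b)) (s i) = evalt (fst M) v (s i)" by (intro evalt_agree) auto
        thus ?thesis using False by simp
      qed simp
    qed
    thus ?thesis by simp
  qed
  finally show ?case by simp
qed auto

lemma frees_substt: "frees_t (substt s t) = (\<Union>y\<in>frees_t t. frees_t (s y))"
  by (induction t) auto

lemma frees_subst: "frees (subst s \<phi>) \<subseteq> (\<Union>y\<in>frees \<phi>. frees_t (s y))"
proof (induction \<phi> arbitrary: s)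
  case (Ex x \<phi>)
  define z where "z = fresh (\<Union>y\<in>frees \<phi> - {x}. frees_t (s y))"
  have e: "subst s (Ex x \<phi>) = Ex z (subst (s(x:=Var z)) \<phi>)" by (simp add: z_def Let_def)
  have "frees (subst (s(x:=Var z)) \<phi>) \<subseteq> (\<Union>y\<in>frees \<phi>. frees_t ((s(x:=Var z)) y))" using Ex.IH .
  also have "\<dots> \<subseteq> {z} \<union> (\<Union>y\<in>frees \<phi> - {x}. frees_t (s y))" by (auto split: if_split_asm)
  finally show ?case using e by auto
next
  case (Conj a b)
  have "frees (subst s a) \<subseteq> (\<Union>y\<in>frees a. frees_t (s y))" "frees (subst s b) \<subseteq> (\<Union>y\<in>frees b. frees_t (s y))"
    using Conj.IH by auto
  thus ?case by auto
qed (auto simp: frees_substt)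

lemma params_substt: "params_t (substt s t) \<subseteq> params_t t \<union> (\<Union>y. params_t (s y))"
  by (induction t) auto

lemma params_subst: "params (subst s \<phi>) \<subseteq> params \<phi> \<union> (\<Union>y. params_t (s y))"
proof (induction \<phi> arbitrary: s)
  case (Eq a b) thus ?case using params_substt[of s a] params_substt[of s b] by auto
next
  case (Rel r ts) thus ?case using params_substt[of s] by fastforce
next
  case (Ex x \<phi>)
  define z where "z = fresh (\<Union>y\<in>frees \<phi> - {x}. frees_t (s y))"
  have e: "subst s (Ex x \<phi>) = Ex z (subst (s(x:=Var z)) \<phi>)" by (simp add: z_def Let_def)
  have "params (subst (s(x:=Var z)) \<phi>) \<subseteq> params \<phi> \<union> (\<Union>y. params_t ((s(x:=Var z)) y))" using Ex.IH .
  also have "\<dots> \<subseteq> params \<phi> \<union> (\<Union>y. params_t (s y))" by (auto split: if_split_asm)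
  finally show ?case using e by auto
qed auto

lemma wft_substt: "(\<forall>y. wft fa (s y)) \<Longrightarrow> wft fa t \<Longrightarrow> wft fa (substt s t)"
  by (induction t) auto

lemma wff_subst: "(\<forall>y. wft (fst L) (s y)) \<Longrightarrow> wff L \<phi> \<Longrightarrow> wff L (subst s \<phi>)"
proof (induction \<phi> arbitrary: s)
  case (Ex x \<phi>)
  define z where "z = fresh (\<Union>y\<in>frees \<phi> - {x}. frees_t (s y))"
  have e: "subst s (Ex x \<phi>) = Ex z (subst (s(x:=Var z)) \<phi>)" by (simp add: z_def Let_def)
  have "\<forall>y. wft (fst L) ((s(x:=Var z)) y)" using Ex.prems by auto
  thus ?case using e Ex by auto
qed (auto simp: wft_substt)

definition top :: "('f,'r,'a) fm" where "top = Ex 0 (Eq (Var 0) (Var 0))"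

fun conjs :: "('f,'r,'a) fm list \<Rightarrow> ('f,'r,'a) fm" where
  "conjs [] = top"
| "conjs (\<phi> # l) = Conj \<phi> (conjs l)"

lemma sat_conjs: "sat M v (conjs l) = (\<forall>\<phi>\<in>set l. sat M v \<phi>)"
  by (induction l) (auto simp: top_def)

lemma Lfm_conjs: "\<forall>\<phi>\<in>set l. Lfm L A n \<phi> \<Longrightarrow> Lfm L A n (conjs l)"
  by (induction l) (auto simp: top_def Lfm_def)

lemma Lfm_mono: "Lfm L A n \<phi> \<Longrightarrow> A \<subseteq> B \<Longrightarrow> Lfm L B n \<phi>"
  unfolding Lfm_def by auto

lemma Lfm_Neg[simp]: "Lfm L A n (Neg \<phi>) = Lfm L A n \<phi>"
  unfolding Lfm_def by auto

definition tp :: "('f,'r) lang \<Rightarrow> ('f,'r,'a) struc \<Rightarrow> 'a set \<Rightarrow> 'a list \<Rightarrow> ('f,'r,'a) fm set" where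
  "tp L M A a = {\<phi>. Lfm L A (length a) \<phi> \<and> satT M a \<phi>}"

lemma ctype_tp: "ctype L M A (length a) (tp L M A a)"
  unfolding ctype_def tp_def realizes_def satT_def by auto

definition finsat :: "('f,'r,'a) struc \<Rightarrow> nat \<Rightarrow> ('f,'r,'a) fm set \<Rightarrow> bool" where
  "finsat M n Q \<longleftrightarrow> (\<forall>F. finite F \<and> F \<subseteq> Q \<longrightarrow> (\<exists>a. length a = n \<and> realizes M a F))"

lemma complete_ext:
  assumes "\<forall>\<phi>\<in>Q. Lfm L A n \<phi>" "finsat M n Q"
  shows "\<exists>p. ctype L M A n p \<and> Q \<subseteq> p"
proof -
  define \<A> where "\<A> = {P. Q \<subseteq> P \<and> (\<forall>\<phi>\<in>P. Lfm L A n \<phi>) \<and> finsat M n P}"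
  have "\<exists>P\<in>\<A>. \<forall>X\<in>\<A>. P \<subseteq> X \<longrightarrow> X = P"
  proof (rule subset_Zorn_nonempty)
    have "Q \<in> \<A>" using assms unfolding \<A>_def by simp
    thus "\<A> \<noteq> {}" by blast
    fix \<C> assume C: "\<C> \<noteq> {}" "subset.chain \<A> \<C>"
    have sub: "\<C> \<subseteq> \<A>" using C(2) unfolding subset.chain_def by blast
    show "\<Union>\<C> \<in> \<A>" unfolding \<A>_def
    proof (intro CollectI conjI)
      show "Q \<subseteq> \<Union>\<C>" using C sub unfolding \<A>_def by blast
      show "\<forall>\<phi>\<in>\<Union>\<C>. Lfm L A n \<phi>" using sub unfolding \<A>_def by blast
      show "finsat M n (\<Union>\<C>)" unfolding finsat_def
      proof (intro allI impI)
        fix F assume F: "finite F \<and> F \<subseteq> \<Union>\<C>"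
        obtain B where B: "B \<in> \<C>" "F \<subseteq> B" using finite_subset_Union_chain[OF _ _ C(1) C(2), of F] F by blast
        hence "finsat M n B" using sub unfolding \<A>_def by blast
        thus "\<exists>a. length a = n \<and> realizes M a F" using B F unfolding finsat_def by blast
      qed
    qed
  qed
  then obtain P where P: "P \<in> \<A>" "\<And>X. X \<in> \<A> \<Longrightarrow> P \<subseteq> X \<Longrightarrow> X = P" by blast
  have PL: "\<forall>\<phi>\<in>P. Lfm L A n \<phi>" and Pf: "finsat M n P" and QP: "Q \<subseteq> P" using P(1) unfolding \<A>_def by auto
  have compl: "\<phi> \<in> P \<or> Neg \<phi> \<in> P" if L: "Lfm L A n \<phi>" for \<phi>
  proof (rule ccontr)
    assume nn: "\<not> (\<phi> \<in> P \<or> Neg \<phi> \<in> P)"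
    have nf: "\<not> finsat M n (insert \<psi> P)" if "\<psi> \<notin> P" "Lfm L A n \<psi>" for \<psi>
    proof
      assume fi: "finsat M n (insert \<psi> P)"
      have "Q \<subseteq> insert \<psi> P" using QP by blast
      moreover have "\<forall>\<phi>\<in>insert \<psi> P. Lfm L A n \<phi>" using PL that(2) by blast
      ultimately have "insert \<psi> P \<in> \<A>" using fi unfolding \<A>_def by blast
      hence "insert \<psi> P = P" using P(2) by blast
      thus False using that by blast
    qed
    have n1: "\<not> finsat M n (insert \<phi> P)" by (rule nf) (use nn L in auto)
    have "\<exists>F1. finite F1 \<and> F1 \<subseteq> insert \<phi> P \<and> (\<forall>a. length a = n \<longrightarrow> \<not> realizes M a F1)"
      using n1 unfolding finsat_def by blast
    then obtain F1 where F1: "finite F1" "F1 \<subseteq> insert \<phi> P" "\<forall>a. length a = n \<longrightarrow> \<not> realizes M a F1"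
      by blast
    have n2: "\<not> finsat M n (insert (Neg \<phi>) P)" by (rule nf) (use nn L in auto)
    have "\<exists>F2. finite F2 \<and> F2 \<subseteq> insert (Neg \<phi>) P \<and> (\<forall>a. length a = n \<longrightarrow> \<not> realizes M a F2)"
      using n2 unfolding finsat_def by blast
    then obtain F2 where F2: "finite F2" "F2 \<subseteq> insert (Neg \<phi>) P" "\<forall>a. length a = n \<longrightarrow> \<not> realizes M a F2"
      by blast
    have fin: "finite ((F1 - {\<phi>}) \<union> (F2 - {Neg \<phi>}))" using F1(1) F2(1) by blast
    have sub: "(F1 - {\<phi>}) \<union> (F2 - {Neg \<phi>}) \<subseteq> P" using F1(2) F2(2) by blast
    obtain a where a: "length a = n" "realizes M a ((F1 - {\<phi>}) \<union> (F2 - {Neg \<phi>}))"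
      using Pf[unfolded finsat_def, rule_format, OF conjI[OF fin sub]] by blast
    show False
    proof (cases "satT M a \<phi>")
      case True
      hence "realizes M a F1" using a(2) unfolding realizes_def by auto
      thus False using F1(3) a(1) by blast
    next
      case False
      hence "realizes M a F2" using a(2) unfolding realizes_def satT_def by auto
      thus False using F2(3) a(1) by blast
    qed
  qed
  have "\<forall>Q. finite Q \<and> Q \<subseteq> P \<longrightarrow> (\<exists>a. length a = n \<and> realizes M a Q)"
    using Pf unfolding finsat_def by blast
  hence "ctype L M A n P" unfolding ctype_def using PL compl by blast
  thus ?thesis using QP by blast
qed

lemma monsterD:
  assumes "monster L M \<kappa>"
  shows "Card_order \<kappa>" "infinite (Field \<kappa>)"
    "\<And>A n p. small \<kappa> A \<Longrightarrow> ctype L M A n p \<Longrightarrow> \<exists>a. length a = n \<and> realizes M a p"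
  using assms unfolding monster_def by blast+

lemma realize:
  assumes "monster L M \<kappa>" "small \<kappa> A" "\<forall>\<phi>\<in>Q. Lfm L A n \<phi>" "finsat M n Q"
  shows "\<exists>a. length a = n \<and> realizes M a Q"
proof -
  obtain p where "ctype L M A n p" "Q \<subseteq> p" using complete_ext assms(3,4) by blast
  thus ?thesis using monsterD(3)[OF assms(1,2)] unfolding realizes_def by blast
qed

lemma monsterH:
  fixes L :: "('f,'r) lang" and M :: "('f,'r,'a) struc" and \<kappa> :: "'k rel"
  assumes "monster L M \<kappa>" "small \<kappa> A"
    "\<forall>\<phi> a. set a \<subseteq> A \<and> Lfm L {} (length a) \<phi> \<longrightarrow> (satT M a \<phi> \<longleftrightarrow> satT M (map g a) \<phi>)"
  shows "\<exists>\<sigma>. automorphism L M \<sigma> \<and> (\<forall>x\<in>A. \<sigma> x = g x)"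
  using assms unfolding monster_def by blast

lemma hom:
  fixes L :: "('f,'r) lang" and M :: "('f,'r,'a) struc" and \<kappa> :: "'k rel"
  assumes mon: "monster L M \<kappa>" and sA: "small \<kappa> A" and la: "length a = n" and lb: "length b = n"
    and same: "\<forall>\<phi>. Lfm L A n \<phi> \<longrightarrow> (satT M a \<phi> \<longleftrightarrow> satT M b \<phi>)"
  shows "\<exists>\<sigma>. automorphism L M \<sigma> \<and> (\<forall>x\<in>A. \<sigma> x = x) \<and> map \<sigma> a = b"
proof -
  define D where "D = A \<union> set a"
  have sD: "small \<kappa> D" unfolding D_def using small_Un_fin monsterD[OF mon] sA by blast
  define idx where "idx x = (SOME i. i < n \<and> a ! i = x)" for x
  have idx: "idx x < n \<and> a ! (idx x) = x" if "x \<in> set a" for x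
  proof -
    have "\<exists>i. i < n \<and> a ! i = x" using that la by (auto simp: in_set_conv_nth)
    thus ?thesis unfolding idx_def by (rule someI_ex)
  qed
  define g where "g x = (if x \<in> A then x else b ! idx x)" for x
  have elem: "\<forall>\<phi> xs. set xs \<subseteq> D \<and> Lfm L {} (length xs) \<phi> \<longrightarrow> (satT M xs \<phi> \<longleftrightarrow> satT M (map g xs) \<phi>)"
  proof (intro allI impI)
    fix \<phi> :: "('f,'r,'a) fm" and xs assume H: "set xs \<subseteq> D \<and> Lfm L {} (length xs) \<phi>"
    define s :: "nat \<Rightarrow> ('f,'a) trm" where "s j = (if xs ! j \<in> A then Par (xs ! j) else Var (idx (xs ! j)))" for j :: nat
    define \<psi> where "\<psi> = subst s \<phi>"
    have fr: "y < length xs" if "y \<in> frees \<phi>" for y using H that unfolding Lfm_def by auto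
    have inD: "xs ! y \<in> D" if "y \<in> frees \<phi>" for y using H fr[OF that] by auto
    have L\<psi>: "Lfm L A n \<psi>" unfolding Lfm_def
    proof (intro conjI)
      show "wff L \<psi>" unfolding \<psi>_def using H by (intro wff_subst) (auto simp: s_def Lfm_def)
      have "params \<psi> \<subseteq> params \<phi> \<union> (\<Union>y. params_t (s y))" unfolding \<psi>_def by (rule params_subst)
      also have "\<dots> \<subseteq> A" using H by (auto simp: s_def Lfm_def split: if_split_asm)
      finally show "params \<psi> \<subseteq> A" .
      have "frees \<psi> \<subseteq> (\<Union>y\<in>frees \<phi>. frees_t (s y))" unfolding \<psi>_def by (rule frees_subst)
      also have "\<dots> \<subseteq> {..<n}"
      proof (intro UN_least)
        fix y assume y: "y \<in> frees \<phi>"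
        show "frees_t (s y) \<subseteq> {..<n}"
        proof (cases "xs ! y \<in> A")
          case False
          hence "xs ! y \<in> set a" using inD[OF y] D_def by auto
          thus ?thesis using idx False by (auto simp: s_def)
        qed (simp add: s_def)
      qed
      finally show "frees \<psi> \<subseteq> {..<n}" .
    qed
    have va: "evalt (fst M) (\<lambda>i. a ! i) (s y) = xs ! y" if "y \<in> frees \<phi>" for y
    proof (cases "xs ! y \<in> A")
      case False
      hence "xs ! y \<in> set a" using inD[OF that] D_def by auto
      thus ?thesis using idx False by (auto simp: s_def)
    qed (simp add: s_def)
    have vb: "evalt (fst M) (\<lambda>i. b ! i) (s y) = map g xs ! y" if "y \<in> frees \<phi>" for y
      using fr[OF that] by (auto simp: s_def g_def)
    have "satT M a \<psi> = satT M xs \<phi>" unfolding satT_def \<psi>_def sat_subst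
      by (rule sat_agree) (simp add: va)
    moreover have "satT M b \<psi> = satT M (map g xs) \<phi>" unfolding satT_def \<psi>_def sat_subst
      by (rule sat_agree) (simp add: vb)
    ultimately show "satT M xs \<phi> \<longleftrightarrow> satT M (map g xs) \<phi>" using same L\<psi> by blast
  qed
  obtain \<sigma> where \<sigma>: "automorphism L M \<sigma>" "\<forall>x\<in>D. \<sigma> x = g x" using monsterH[OF mon sD elem] by blast
  have "map \<sigma> a = b"
  proof (rule nth_equalityI)
    show "length (map \<sigma> a) = length b" using la lb by simp
    fix i assume "i < length (map \<sigma> a)"
    hence i: "i < n" using la by simp
    have ai: "a ! i \<in> D" using i la D_def by auto
    show "map \<sigma> a ! i = b ! i"
    proof (cases "a ! i \<in> A")
      case True
      have "Lfm L A n (Eq (Var i) (Par (a ! i)))" using True i by (simp add: Lfm_def)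
      moreover have "satT M a (Eq (Var i) (Par (a ! i)))" by (simp add: satT_def)
      ultimately have "satT M b (Eq (Var i) (Par (a ! i)))" using same by blast
      hence "b ! i = a ! i" by (simp add: satT_def)
      thus ?thesis using \<sigma>(2) ai True i la by (simp add: g_def)
    next
      case False
      define j where "j = idx (a ! i)"
      have j: "j < n" "a ! j = a ! i" using idx[of "a ! i"] i la j_def by auto
      have "Lfm L A n (Eq (Var i) (Var j))" using i j by (simp add: Lfm_def)
      moreover have "satT M a (Eq (Var i) (Var j))" using j by (simp add: satT_def)
      ultimately have "satT M b (Eq (Var i) (Var j))" using same by blast
      hence "b ! i = b ! j" by (simp add: satT_def)
      thus ?thesis using \<sigma>(2) ai False i la j_def by (simp add: g_def)
    qed
  qed
  moreover have "\<forall>x\<in>A. \<sigma> x = x" using \<sigma>(2) D_def g_def by auto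
  ultimately show ?thesis using \<sigma>(1) by blast
qed

lemma move:
  fixes L :: "('f,'r) lang" and M :: "('f,'r,'a) struc" and \<kappa> :: "'k rel"
  assumes mon: "monster L M \<kappa>" and sA: "small \<kappa> A" and fF: "finite F"
    and H: "\<forall>\<theta>. Lfm L A 1 \<theta> \<and> satT M [b] \<theta> \<longrightarrow> (\<exists>c. c \<notin> F \<and> satT M [c] \<theta>)"
  shows "\<exists>\<sigma>. automorphism L M \<sigma> \<and> (\<forall>x\<in>A. \<sigma> x = x) \<and> \<sigma> b \<notin> F"
proof -
  define Q where "Q = tp L M A [b] \<union> {Neg (Eq (Var 0) (Par f)) | f. f \<in> F}"
  have QL: "\<forall>\<phi>\<in>Q. Lfm L (A \<union> F) 1 \<phi>"
    unfolding Q_def tp_def by (auto simp: Lfm_def)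
  have fs: "finsat M 1 Q" unfolding finsat_def
  proof (intro allI impI)
    fix G assume G: "finite G \<and> G \<subseteq> Q"
    define G1 where "G1 = G \<inter> tp L M A [b]"
    have "finite G1" using G G1_def by auto
    then obtain l where l: "set l = G1" using finite_list by blast
    have "Lfm L A 1 (conjs l)" using l G1_def by (intro Lfm_conjs) (auto simp: tp_def)
    moreover have "satT M [b] (conjs l)" using l G1_def by (auto simp: tp_def satT_def sat_conjs)
    ultimately obtain c where c: "c \<notin> F" "satT M [c] (conjs l)" using H by blast
    have "realizes M [c] G" unfolding realizes_def
    proof
      fix \<phi> assume \<phi>: "\<phi> \<in> G"
      show "satT M [c] \<phi>"
      proof (cases "\<phi> \<in> tp L M A [b]")
        case True
        thus ?thesis using c(2) l \<phi> G1_def by (auto simp: satT_def sat_conjs)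
      next
        case False
        then obtain f where "f \<in> F" "\<phi> = Neg (Eq (Var 0) (Par f))" using G \<phi> Q_def by auto
        thus ?thesis using c(1) by (auto simp: satT_def)
      qed
    qed
    thus "\<exists>a. length a = 1 \<and> realizes M a G" by (intro exI[of _ "[c]"]) simp
  qed
  obtain a where a: "length a = 1" "realizes M a Q"
    using realize[OF mon _ QL fs] small_Un_fin[OF monsterD(1,2)[OF mon] sA fF] by blast
  then obtain c where c: "a = [c]" by (metis One_nat_def length_0_conv length_Suc_conv)
  have cF: "c \<notin> F"
  proof
    assume "c \<in> F"
    hence "Neg (Eq (Var 0) (Par c)) \<in> Q" unfolding Q_def by blast
    thus False using a(2) c unfolding realizes_def by (auto simp: satT_def)
  qed
  have "\<forall>\<phi>. Lfm L A 1 \<phi> \<longrightarrow> (satT M [b] \<phi> \<longleftrightarrow> satT M [c] \<phi>)"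
  proof (intro allI impI)
    fix \<phi> assume L: "Lfm L A 1 \<phi>"
    show "satT M [b] \<phi> \<longleftrightarrow> satT M [c] \<phi>"
    proof (cases "satT M [b] \<phi>")
      case True
      hence "\<phi> \<in> Q" using L by (auto simp: Q_def tp_def)
      thus ?thesis using a(2) c True unfolding realizes_def by auto
    next
      case False
      hence "Neg \<phi> \<in> Q" using L by (auto simp: Q_def tp_def satT_def)
      thus ?thesis using a(2) c False unfolding realizes_def by (auto simp: satT_def)
    qed
  qed
  then obtain \<sigma> where "automorphism L M \<sigma>" "\<forall>x\<in>A. \<sigma> x = x" "map \<sigma> [b] = [c]"
    using hom[OF mon sA, of "[b]" 1 "[c]"] by auto
  thus ?thesis using cF by auto
qed

lemma dcl_of_fixed:
  fixes L :: "('f,'r) lang" and M :: "('f,'r,'a) struc" and \<kappa> :: "'k rel"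
  assumes mon: "monster L M \<kappa>" and sA: "small \<kappa> A"
    and fx: "\<forall>\<sigma>. automorphism L M \<sigma> \<and> (\<forall>x\<in>A. \<sigma> x = x) \<longrightarrow> \<sigma> b = b"
  shows "b \<in> dcl L M A"
proof (rule ccontr)
  assume nb: "b \<notin> dcl L M A"
  have "\<forall>\<theta>. Lfm L A 1 \<theta> \<and> satT M [b] \<theta> \<longrightarrow> (\<exists>c. c \<notin> {b} \<and> satT M [c] \<theta>)"
  proof (intro allI impI)
    fix \<theta> assume \<theta>: "Lfm L A 1 \<theta> \<and> satT M [b] \<theta>"
    show "\<exists>c. c \<notin> {b} \<and> satT M [c] \<theta>"
    proof (rule ccontr)
      assume "\<not> ?thesis"
      hence "{c. satT M [c] \<theta>} = {b}" using \<theta> by auto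
      hence "\<exists>\<phi>. Lfm L A 1 \<phi> \<and> {c. satT M [c] \<phi>} = {b}" using \<theta> by blast
      hence "b \<in> dcl L M A" unfolding dcl_def by simp
      thus False using nb by simp
    qed
  qed
  then obtain \<sigma> where "automorphism L M \<sigma>" "\<forall>x\<in>A. \<sigma> x = x" "\<sigma> b \<notin> {b}"
    using move[OF mon sA, of "{b}" b] by blast
  thus False using fx by blast
qed

lemma acl_of_finorbit:
  fixes L :: "('f,'r) lang" and M :: "('f,'r,'a) struc" and \<kappa> :: "'k rel"
  assumes mon: "monster L M \<kappa>" and sA: "small \<kappa> A"
    and fin: "finite {\<sigma> b | \<sigma>. automorphism L M \<sigma> \<and> (\<forall>x\<in>A. \<sigma> x = x)}"
  shows "b \<in> acl L M A"
proof (rule ccontr)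
  assume nb: "b \<notin> acl L M A"
  let ?F = "{\<sigma> b | \<sigma>. automorphism L M \<sigma> \<and> (\<forall>x\<in>A. \<sigma> x = x)}"
  have "\<forall>\<theta>. Lfm L A 1 \<theta> \<and> satT M [b] \<theta> \<longrightarrow> (\<exists>c. c \<notin> ?F \<and> satT M [c] \<theta>)"
  proof (intro allI impI)
    fix \<theta> assume \<theta>: "Lfm L A 1 \<theta> \<and> satT M [b] \<theta>"
    have "infinite {c. satT M [c] \<theta>}"
    proof
      assume "finite {c. satT M [c] \<theta>}"
      hence "\<exists>\<phi>. Lfm L A 1 \<phi> \<and> finite {c. satT M [c] \<phi>} \<and> b \<in> {c. satT M [c] \<phi>}" using \<theta> by blast
      hence "b \<in> acl L M A" unfolding acl_def by simp
      thus False using nb by simp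
    qed
    hence "infinite ({c. satT M [c] \<theta>} - ?F)" using fin by (rule Diff_infinite_finite[rotated])
    hence "{c. satT M [c] \<theta>} - ?F \<noteq> {}" by (metis finite.emptyI)
    then obtain c where "c \<in> {c. satT M [c] \<theta>} - ?F" by blast
    thus "\<exists>c. c \<notin> ?F \<and> satT M [c] \<theta>" by blast
  qed
  then obtain \<sigma> where "automorphism L M \<sigma>" "\<forall>x\<in>A. \<sigma> x = x" "\<sigma> b \<notin> ?F"
    using move[OF mon sA fin, of b] by blast
  thus False by blast
qed

lemma dcl_fixed:
  assumes "b \<in> dcl L M A" "automorphism L M \<sigma>" "\<forall>x\<in>A. \<sigma> x = x"
  shows "\<sigma> b = b"
proof -
  obtain \<psi> where \<psi>: "Lfm L A 1 \<psi>" "{c. satT M [c] \<psi>} = {b}" using assms(1) unfolding dcl_def by auto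
  have "satT M (map \<sigma> [b]) \<psi> = satT M [b] \<psi>" using aut_satT_fix[OF assms(2), of A "[b]" \<psi>] \<psi>(1) assms(3) by simp
  hence "satT M [\<sigma> b] \<psi>" using \<psi>(2) by auto
  thus ?thesis using \<psi>(2) by auto
qed

lemma acl_orbit:
  assumes "b \<in> acl L M A"
  shows "finite {\<sigma> b | \<sigma>. automorphism L M \<sigma> \<and> (\<forall>x\<in>A. \<sigma> x = x)}"
proof -
  obtain \<psi> where \<psi>: "Lfm L A 1 \<psi>" "finite {c. satT M [c] \<psi>}" "satT M [b] \<psi>" using assms unfolding acl_def by auto
  have "{\<sigma> b | \<sigma>. automorphism L M \<sigma> \<and> (\<forall>x\<in>A. \<sigma> x = x)} \<subseteq> {c. satT M [c] \<psi>}"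
  proof
    fix y assume "y \<in> {\<sigma> b | \<sigma>. automorphism L M \<sigma> \<and> (\<forall>x\<in>A. \<sigma> x = x)}"
    then obtain \<sigma> where s: "automorphism L M \<sigma>" "\<forall>x\<in>A. \<sigma> x = x" "y = \<sigma> b" by blast
    have "satT M (map \<sigma> [b]) \<psi> = satT M [b] \<psi>" using aut_satT_fix[OF s(1), of A "[b]" \<psi>] \<psi>(1) s(2) by simp
    thus "y \<in> {c. satT M [c] \<psi>}" using \<psi>(3) s(3) by simp
  qed
  thus ?thesis using \<psi>(2) finite_subset by blast
qed

lemma sub_dcl: "A \<subseteq> dcl L M A"
proof
  fix e assume e: "e \<in> A"
  have "Lfm L A 1 (Eq (Var 0) (Par e))" using e by (simp add: Lfm_def)
  moreover have "{c. satT M [c] (Eq (Var 0) (Par e))} = {e}" by (auto simp: satT_def)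
  ultimately have "\<exists>\<phi>. Lfm L A 1 \<phi> \<and> {c. satT M [c] \<phi>} = {e}" by (intro exI[of _ "Eq (Var 0) (Par e)"]) simp
  thus "e \<in> dcl L M A" unfolding dcl_def by simp
qed

lemma dcl_acl: "dcl L M A \<subseteq> acl L M A"
proof
  fix b assume "b \<in> dcl L M A"
  then obtain \<phi> where "Lfm L A 1 \<phi>" "{c. satT M [c] \<phi>} = {b}" unfolding dcl_def by auto
  hence "Lfm L A 1 \<phi> \<and> finite {c. satT M [c] \<phi>} \<and> b \<in> {c. satT M [c] \<phi>}" by simp
  hence "\<exists>\<phi>. Lfm L A 1 \<phi> \<and> finite {c. satT M [c] \<phi>} \<and> b \<in> {c. satT M [c] \<phi>}" by (intro exI[of _ \<phi>])
  thus "b \<in> acl L M A" unfolding acl_def by simp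
qed

lemma dcl_mono: assumes AB: "A \<subseteq> B" shows "dcl L M A \<subseteq> dcl L M B"
proof
  fix b assume "b \<in> dcl L M A"
  then obtain \<phi> where "Lfm L A 1 \<phi>" "{c. satT M [c] \<phi>} = {b}" unfolding dcl_def by auto
  hence "Lfm L B 1 \<phi> \<and> {c. satT M [c] \<phi>} = {b}" using Lfm_mono AB by blast
  hence "\<exists>\<phi>. Lfm L B 1 \<phi> \<and> {c. satT M [c] \<phi>} = {b}" by (intro exI[of _ \<phi>])
  thus "b \<in> dcl L M B" unfolding dcl_def by simp
qed

lemma sub_acl: "A \<subseteq> acl L M A"
  by (rule subset_trans[OF sub_dcl dcl_acl])

lemma ctypeD:
  assumes "ctype L M A n p"
  shows "\<forall>\<phi>\<in>p. Lfm L A n \<phi>" "\<And>\<phi>. Lfm L A n \<phi> \<Longrightarrow> \<phi> \<in> p \<or> Neg \<phi> \<in> p"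
    "\<And>Q. finite Q \<Longrightarrow> Q \<subseteq> p \<Longrightarrow> \<exists>a. length a = n \<and> realizes M a Q"
  using assms unfolding ctype_def by blast+

lemma realizes_tp:
  assumes "realizes M a p" "\<forall>\<phi>\<in>p. Lfm L E (length a) \<phi>" "E \<subseteq> A"
  shows "p \<subseteq> tp L M A a"
proof
  fix \<phi> assume "\<phi> \<in> p"
  hence "Lfm L A (length a) \<phi>" "satT M a \<phi>" using assms Lfm_mono unfolding realizes_def by blast+
  thus "\<phi> \<in> tp L M A a" unfolding tp_def by simp
qed

lemma aut_realizes:
  assumes "automorphism L M \<sigma>" "\<forall>x\<in>E. \<sigma> x = x" "\<forall>\<phi>\<in>p. Lfm L E (length a) \<phi>" "realizes M a p"
  shows "realizes M (map \<sigma> a) p"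
  unfolding realizes_def
proof
  fix \<phi> assume "\<phi> \<in> p"
  hence "Lfm L E (length a) \<phi>" "satT M a \<phi>" using assms(3,4) unfolding realizes_def by blast+
  thus "satT M (map \<sigma> a) \<phi>" using aut_satT_fix[OF assms(1)] assms(2) by blast
qed

lemma same_type:
  assumes "ctype L M E n p" "realizes M a p" "realizes M b p"
  shows "\<forall>\<phi>. Lfm L E n \<phi> \<longrightarrow> (satT M a \<phi> \<longleftrightarrow> satT M b \<phi>)"
proof (intro allI impI)
  fix \<phi> assume "Lfm L E n \<phi>"
  hence "\<phi> \<in> p \<or> Neg \<phi> \<in> p" using ctypeD(2)[OF assms(1)] by blast
  thus "satT M a \<phi> \<longleftrightarrow> satT M b \<phi>"
  proof
    assume "\<phi> \<in> p" thus ?thesis using assms(2,3) unfolding realizes_def by blast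
  next
    assume "Neg \<phi> \<in> p"
    hence "satT M a (Neg \<phi>)" "satT M b (Neg \<phi>)" using assms(2,3) unfolding realizes_def by blast+
    thus ?thesis by (simp add: satT_def)
  qed
qed

lemma conj_R:
  fixes L :: "('f,'r) lang" and M :: "('f,'r,'a) struc" and \<kappa> :: "'k rel"
  assumes mon: "monster L M \<kappa>" and sE: "small \<kappa> E" and ctp: "ctype L M E n p"
    and a: "length a = n" "realizes M a p" and b: "length b = n" "realizes M b p"
  shows "\<exists>\<sigma>. automorphism L M \<sigma> \<and> (\<forall>x\<in>E. \<sigma> x = x) \<and> map \<sigma> a = b"
  using hom[OF mon sE a(1) b(1) same_type[OF ctp a(2) b(2)]] .

lemma inv_fix:
  assumes "automorphism L M \<tau>" "\<tau> x = x"
  shows "inv \<tau> x = x"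
proof -
  have "bij \<tau>" using assms(1) unfolding automorphism_def by blast
  hence "inj \<tau>" by (rule bij_is_inj)
  thus ?thesis using assms(2) by (metis inv_f_f)
qed

lemma inv_cancel:
  assumes "automorphism L M \<tau>"
  shows "\<tau> (inv \<tau> x) = x" "inv \<tau> (\<tau> x) = x"
proof -
  have "bij \<tau>" using assms(1) unfolding automorphism_def by blast
  thus "\<tau> (inv \<tau> x) = x" "inv \<tau> (\<tau> x) = x"
    by (simp_all add: bij_is_surj surj_f_inv_f bij_is_inj inv_f_f)
qed

lemma st_primary:
  fixes L :: "('f,'r) lang" and M :: "('f,'r,'a) struc" and \<kappa> :: "'k rel"
  assumes mon: "monster L M \<kappa>" and sE: "small \<kappa> E" and ctp: "ctype L M E n p"
    and st: "acl_stationary L M E n p" and a: "length a = n" "realizes M a p"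
  shows "primary L M E (dcl L M (E \<union> set a))"
proof -
  define X where "X = E \<union> set a"
  define K where "K = dcl L M X"
  have sX: "small \<kappa> X" unfolding X_def using small_Un_fin monsterD[OF mon] sE by blast
  have EK: "E \<subseteq> K" unfolding K_def X_def using sub_dcl[of "E \<union> set a" L M] by blast
  have XK: "X \<subseteq> K" unfolding K_def by (rule sub_dcl)
  have pL: "\<forall>\<phi>\<in>p. Lfm L E n \<phi>" using ctypeD(1)[OF ctp] .
  have dK: "dcl L M K \<subseteq> dcl L M X"
  proof
    fix b assume b: "b \<in> dcl L M K"
    show "b \<in> dcl L M X"
    proof (rule dcl_of_fixed[OF mon sX], intro allI impI)
      fix \<sigma> assume \<sigma>: "automorphism L M \<sigma> \<and> (\<forall>x\<in>X. \<sigma> x = x)"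
      have "\<forall>x\<in>K. \<sigma> x = x"
      proof
        fix x assume "x \<in> K"
        thus "\<sigma> x = x" unfolding K_def using dcl_fixed[of x L M X \<sigma>] \<sigma> by simp
      qed
      thus "\<sigma> b = b" using dcl_fixed[OF b] \<sigma> by simp
    qed
  qed
  have "\<exists>!q. ctype L M (acl L M E) n q \<and> p \<subseteq> q" using st unfolding acl_stationary_def .
  then obtain q0 where "\<forall>q. ctype L M (acl L M E) n q \<and> p \<subseteq> q \<longrightarrow> q = q0"
    by (elim ex1E) simp
  hence q0: "\<And>q. ctype L M (acl L M E) n q \<and> p \<subseteq> q \<Longrightarrow> q = q0" by simp
  have "dcl L M K \<inter> acl L M E \<subseteq> dcl L M E"
  proof
    fix b assume b: "b \<in> dcl L M K \<inter> acl L M E"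
    hence bX: "b \<in> dcl L M X" using dK by blast
    have bA: "b \<in> acl L M E" using b by blast
    show "b \<in> dcl L M E"
    proof (rule dcl_of_fixed[OF mon sE], intro allI impI)
      fix \<sigma> assume \<sigma>: "automorphism L M \<sigma> \<and> (\<forall>x\<in>E. \<sigma> x = x)"
      define a' where "a' = map \<sigma> a"
      have a': "length a' = n" "realizes M a' p"
        using a aut_realizes[of L M \<sigma> E p a] \<sigma> pL unfolding a'_def by auto
      have EA: "E \<subseteq> acl L M E" by (rule sub_acl)
      have t1: "ctype L M (acl L M E) n (tp L M (acl L M E) a) \<and> p \<subseteq> tp L M (acl L M E) a"
        using ctype_tp[of L M "acl L M E" a] realizes_tp[OF a(2) _ EA] pL a(1) by simp
      have t2: "ctype L M (acl L M E) n (tp L M (acl L M E) a') \<and> p \<subseteq> tp L M (acl L M E) a'"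
        using ctype_tp[of L M "acl L M E" a'] realizes_tp[OF a'(2) _ EA] pL a'(1) by simp
      have teq: "tp L M (acl L M E) a = tp L M (acl L M E) a'" using q0[OF t1] q0[OF t2] by simp
      define A' where "A' = E \<union> {b}"
      have sA': "small \<kappa> A'" unfolding A'_def using small_Un_fin monsterD[OF mon] sE by blast
      have A'acl: "A' \<subseteq> acl L M E" unfolding A'_def using EA bA by blast
      have same: "\<forall>\<phi>. Lfm L A' n \<phi> \<longrightarrow> (satT M a \<phi> \<longleftrightarrow> satT M a' \<phi>)"
      proof (intro allI impI)
        fix \<phi> assume "Lfm L A' n \<phi>"
        hence L: "Lfm L (acl L M E) n \<phi>" using Lfm_mono A'acl by blast
        have "satT M a \<phi> \<longleftrightarrow> \<phi> \<in> tp L M (acl L M E) a" using L a(1) unfolding tp_def by simp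
        also have "\<dots> \<longleftrightarrow> \<phi> \<in> tp L M (acl L M E) a'" using teq by simp
        also have "\<dots> \<longleftrightarrow> satT M a' \<phi>" using L a'(1) unfolding tp_def by simp
        finally show "satT M a \<phi> \<longleftrightarrow> satT M a' \<phi>" .
      qed
      obtain \<tau> where \<tau>: "automorphism L M \<tau>" "\<forall>x\<in>A'. \<tau> x = x" "map \<tau> a = a'"
        using hom[OF mon sA' a(1) a'(1) same] by blast
      define \<rho> where "\<rho> = inv \<tau> \<circ> \<sigma>"
      have \<sigma>aut: "automorphism L M \<sigma>" using \<sigma> by simp
      have \<rho>aut: "automorphism L M \<rho>" unfolding \<rho>_def by (rule aut_comp[OF aut_inv[OF \<tau>(1)] \<sigma>aut])
      have \<rho>X: "\<forall>x\<in>X. \<rho> x = x"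
      proof
        fix x assume "x \<in> X"
        hence "x \<in> E \<or> x \<in> set a" unfolding X_def by blast
        thus "\<rho> x = x"
        proof
          assume xE: "x \<in> E"
          hence "\<sigma> x = x" "\<tau> x = x" using \<sigma> \<tau>(2) unfolding A'_def by auto
          thus ?thesis unfolding \<rho>_def using inv_fix[OF \<tau>(1)] by simp
        next
          assume "x \<in> set a"
          then obtain i where i: "i < length a" "a ! i = x" by (auto simp: in_set_conv_nth)
          have "\<sigma> x = a' ! i" unfolding a'_def using i by simp
          also have "\<dots> = \<tau> x" using \<tau>(3) i by (metis nth_map)
          finally show ?thesis unfolding \<rho>_def using inv_cancel[OF \<tau>(1)] by simp
        qed
      qed
      have "\<rho> b = b" using dcl_fixed[OF bX \<rho>aut \<rho>X] .
      hence "\<tau> (\<rho> b) = \<tau> b" by simp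
      moreover have "\<tau> b = b" using \<tau>(2) unfolding A'_def by simp
      moreover have "\<tau> (\<rho> b) = \<sigma> b" unfolding \<rho>_def using inv_cancel[OF \<tau>(1)] by simp
      ultimately show "\<sigma> b = b" by simp
    qed
  qed
  moreover have "dcl L M E \<subseteq> dcl L M K \<inter> acl L M E"
    using dcl_mono[OF EK, of L M] dcl_acl[of L M E] by blast
  ultimately have "dcl L M K \<inter> acl L M E = dcl L M E" by blast
  thus ?thesis using EK unfolding primary_def K_def X_def by simp
qed

lemma map_fix_list: "map \<tau> c = c \<Longrightarrow> x \<in> set c \<Longrightarrow> \<tau> x = x"
  by (induction c) auto

lemma code_claim:
  fixes L :: "('f,'r) lang" and M :: "('f,'r,'a) struc" and \<kappa> :: "'k rel"
  assumes mon: "monster L M \<kappa>" and fs: "FS L M" and sE: "small \<kappa> E" and ctp: "ctype L M E n p"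
    and a: "length a = n" "realizes M a p"
    and prim: "primary L M E (dcl L M (E \<union> set a))"
    and L\<phi>: "Lfm L (acl L M E) n \<phi>"
    and a': "length a' = n" "realizes M a' p"
  shows "satT M a' \<phi> \<longleftrightarrow> satT M a \<phi>"
proof -
  define AutE where "AutE = {\<sigma>. automorphism L M \<sigma> \<and> (\<forall>x\<in>E. \<sigma> x = x)}"
  have "finite (params \<phi>)" by (rule finite_params)
  then obtain c where c: "set c = params \<phi>" using finite_list by blast
  have wf: "wff L \<phi>" and fr: "frees \<phi> \<subseteq> {..<n}" and pa: "params \<phi> \<subseteq> acl L M E"
    using L\<phi> unfolding Lfm_def by auto
  define S where "S x = {map \<tau> c | \<tau>. \<tau> \<in> AutE \<and> satT M x (mf \<tau> \<phi>)}" for x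
  define C where "C = {map \<tau> c | \<tau>. \<tau> \<in> AutE}"
  define W where "W = (\<Union>y\<in>set c. {\<tau> y | \<tau>. automorphism L M \<tau> \<and> (\<forall>x\<in>E. \<tau> x = x)})"
  have fW: "finite W" unfolding W_def
  proof (rule finite_UN_I)
    show "finite (set c)" by simp
    fix y assume "y \<in> set c"
    hence "y \<in> acl L M E" using c pa by blast
    thus "finite {\<tau> y | \<tau>. automorphism L M \<tau> \<and> (\<forall>x\<in>E. \<tau> x = x)}" by (rule acl_orbit)
  qed
  have CW: "C \<subseteq> {l. set l \<subseteq> W \<and> length l = length c}"
  proof
    fix l assume "l \<in> C"
    then obtain \<tau> where \<tau>: "\<tau> \<in> AutE" "l = map \<tau> c" unfolding C_def by blast
    have "set l \<subseteq> W"
    proof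
      fix z assume "z \<in> set l"
      then obtain y where y: "y \<in> set c" "z = \<tau> y" using \<tau>(2) by auto
      thus "z \<in> W" using \<tau>(1) unfolding W_def AutE_def by blast
    qed
    thus "l \<in> {l. set l \<subseteq> W \<and> length l = length c}" using \<tau>(2) by simp
  qed
  have fC: "finite C" using finite_subset[OF CW finite_lists_length_eq[OF fW]] .
  have SC: "S x \<subseteq> C" for x unfolding S_def C_def by blast
  have Seq: "map \<rho> ` S x = S (map \<rho> x)" if \<rho>: "\<rho> \<in> AutE" and lx: "length x = n" for \<rho> x
  proof -
    have \<rho>a: "automorphism L M \<rho>" and \<rho>E: "\<forall>e\<in>E. \<rho> e = e" using \<rho> unfolding AutE_def by auto
    have key: "satT M (map \<rho> x) (mf \<rho> (mf \<tau> \<phi>)) = satT M x (mf \<tau> \<phi>)" for \<tau>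
      using aut_satT[OF \<rho>a, of "mf \<tau> \<phi>" x] wf fr lx by (simp add: mf_wff mf_frees)
    show ?thesis
    proof
      show "map \<rho> ` S x \<subseteq> S (map \<rho> x)"
      proof
        fix y assume "y \<in> map \<rho> ` S x"
        then obtain \<tau> where \<tau>: "\<tau> \<in> AutE" "satT M x (mf \<tau> \<phi>)" "y = map \<rho> (map \<tau> c)"
          unfolding S_def by blast
        have \<tau>a: "automorphism L M \<tau>" "\<forall>e\<in>E. \<tau> e = e" using \<tau>(1) unfolding AutE_def by auto
        have "automorphism L M (\<rho> \<circ> \<tau>)" by (rule aut_comp[OF \<rho>a \<tau>a(1)])
        hence "\<rho> \<circ> \<tau> \<in> AutE" using \<tau>a(2) \<rho>E unfolding AutE_def by simp
        moreover have "satT M (map \<rho> x) (mf (\<rho> \<circ> \<tau>) \<phi>)" using key[of \<tau>] \<tau>(2) by (simp add: mf_comp)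
        moreover have "y = map (\<rho> \<circ> \<tau>) c" using \<tau>(3) by simp
        ultimately show "y \<in> S (map \<rho> x)" unfolding S_def by blast
      qed
    next
      show "S (map \<rho> x) \<subseteq> map \<rho> ` S x"
      proof
        fix y assume "y \<in> S (map \<rho> x)"
        then obtain \<tau> where \<tau>: "\<tau> \<in> AutE" "satT M (map \<rho> x) (mf \<tau> \<phi>)" "y = map \<tau> c"
          unfolding S_def by blast
        define \<tau>' where "\<tau>' = inv \<rho> \<circ> \<tau>"
        have \<tau>a: "automorphism L M \<tau>" using \<tau>(1) unfolding AutE_def by simp
        have "automorphism L M \<tau>'" unfolding \<tau>'_def by (rule aut_comp[OF aut_inv[OF \<rho>a] \<tau>a])
        moreover have "\<forall>e\<in>E. \<tau>' e = e" unfolding \<tau>'_def using \<tau>(1) \<rho>E inv_fix[OF \<rho>a] unfolding AutE_def by auto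
        ultimately have \<tau>'E: "\<tau>' \<in> AutE" unfolding AutE_def by simp
        have rt: "\<rho> \<circ> \<tau>' = \<tau>" unfolding \<tau>'_def using inv_cancel[OF \<rho>a] by (simp add: fun_eq_iff)
        have "satT M x (mf \<tau>' \<phi>)" using key[of \<tau>'] \<tau>(2) rt by (simp add: mf_comp)
        hence "map \<tau>' c \<in> S x" using \<tau>'E unfolding S_def by blast
        moreover have "y = map \<rho> (map \<tau>' c)" using \<tau>(3) rt by (simp add: map_map)
        ultimately show "y \<in> map \<rho> ` S x" by blast
      qed
    qed
  qed
  have fSa: "finite (S a)" using finite_subset[OF SC fC] .
  have lSa: "\<forall>s\<in>S a. length s = length c"
  proof
    fix s assume "s \<in> S a"
    then obtain \<tau> where "s = map \<tau> c" unfolding S_def by blast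
    thus "length s = length c" by simp
  qed
  obtain d where d: "is_code L M d (S a)"
    using fs[unfolded FS_def, rule_format, OF conjI[OF fSa lSa]] by blast
  have dcode: "map \<rho> ` S a = S a \<longleftrightarrow> map \<rho> d = d" if "automorphism L M \<rho>" for \<rho>
    using d that unfolding is_code_def by blast
  define X where "X = E \<union> set a"
  have sX: "small \<kappa> X" unfolding X_def using small_Un_fin monsterD[OF mon] sE by blast
  have dE: "d ! i \<in> dcl L M E" if i: "i < length d" for i
  proof -
    have "d ! i \<in> dcl L M X"
    proof (rule dcl_of_fixed[OF mon sX], intro allI impI)
      fix \<rho> assume \<rho>: "automorphism L M \<rho> \<and> (\<forall>x\<in>X. \<rho> x = x)"
      have \<rho>A: "\<rho> \<in> AutE" using \<rho> unfolding AutE_def X_def by simp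
      have "map \<rho> a = a" using \<rho> unfolding X_def by (simp add: map_idI)
      hence "map \<rho> ` S a = S a" using Seq[OF \<rho>A a(1)] by simp
      hence "map \<rho> d = d" using dcode[of \<rho>] \<rho> by simp
      hence "map \<rho> d ! i = d ! i" by simp
      thus "\<rho> (d ! i) = d ! i" using i by simp
    qed
    moreover have "dcl L M X \<subseteq> dcl L M (dcl L M X)" by (rule sub_dcl)
    ultimately have d1: "d ! i \<in> dcl L M (dcl L M X)" by (rule rev_subsetD)
    define G where "G Y = (SOME d'. \<exists>\<rho>\<in>AutE. map \<rho> ` S a = Y \<and> d' = map \<rho> d)" for Y
    have Gp: "map \<rho> d = G (map \<rho> ` S a)" if \<rho>: "\<rho> \<in> AutE" for \<rho>
    proof -
      have "\<exists>d'. \<exists>\<rho>'\<in>AutE. map \<rho>' ` S a = map \<rho> ` S a \<and> d' = map \<rho>' d" using \<rho> by blast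
      hence "\<exists>\<rho>'\<in>AutE. map \<rho>' ` S a = map \<rho> ` S a \<and> G (map \<rho> ` S a) = map \<rho>' d"
        unfolding G_def by (rule someI_ex)
      then obtain \<rho>' where \<rho>': "\<rho>' \<in> AutE" "map \<rho>' ` S a = map \<rho> ` S a" "G (map \<rho> ` S a) = map \<rho>' d"
        by blast
      have \<rho>'a: "automorphism L M \<rho>'" and \<rho>a: "automorphism L M \<rho>" using \<rho> \<rho>' unfolding AutE_def by auto
      define \<mu> where "\<mu> = inv \<rho>' \<circ> \<rho>"
      have \<mu>a: "automorphism L M \<mu>" unfolding \<mu>_def by (rule aut_comp[OF aut_inv[OF \<rho>'a] \<rho>a])
      have ii: "map (inv \<rho>') (map \<rho>' l) = l" for l using inv_cancel[OF \<rho>'a] by (simp add: map_idI)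
      have "map \<mu> ` S a = map (inv \<rho>') ` (map \<rho> ` S a)" unfolding \<mu>_def by (simp add: image_image)
      also have "\<dots> = map (inv \<rho>') ` (map \<rho>' ` S a)" using \<rho>'(2) by simp
      also have "\<dots> = S a" using ii by (simp add: image_image)
      finally have "map \<mu> d = d" using dcode[OF \<mu>a] by simp
      hence "map \<rho>' (map \<mu> d) = map \<rho>' d" by simp
      moreover have "\<rho>' \<circ> \<mu> = \<rho>" unfolding \<mu>_def using inv_cancel[OF \<rho>'a] by (simp add: fun_eq_iff)
      ultimately have "map \<rho> d = map \<rho>' d" by (simp add: map_map)
      thus ?thesis using \<rho>'(3) by simp
    qed
    have "{\<rho> (d ! i) | \<rho>. automorphism L M \<rho> \<and> (\<forall>x\<in>E. \<rho> x = x)} \<subseteq> (\<lambda>Y. G Y ! i) ` Pow C"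
    proof
      fix z assume "z \<in> {\<rho> (d ! i) | \<rho>. automorphism L M \<rho> \<and> (\<forall>x\<in>E. \<rho> x = x)}"
      then obtain \<rho> where \<rho>: "\<rho> \<in> AutE" "z = \<rho> (d ! i)" unfolding AutE_def by blast
      have "z = map \<rho> d ! i" using \<rho>(2) i by simp
      also have "\<dots> = G (map \<rho> ` S a) ! i" using Gp[OF \<rho>(1)] by simp
      finally have z: "z = G (map \<rho> ` S a) ! i" .
      have "map \<rho> ` S a = S (map \<rho> a)" using Seq[OF \<rho>(1) a(1)] .
      hence "map \<rho> ` S a \<in> Pow C" using SC by simp
      thus "z \<in> (\<lambda>Y. G Y ! i) ` Pow C" using z by blast
    qed
    hence "finite {\<rho> (d ! i) | \<rho>. automorphism L M \<rho> \<and> (\<forall>x\<in>E. \<rho> x = x)}"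
      by (rule finite_subset[OF _ finite_imageI[OF finite_Pow_iff[THEN iffD2, OF fC]]])
    hence d2: "d ! i \<in> acl L M E" by (rule acl_of_finorbit[OF mon sE])
    have "dcl L M (dcl L M X) \<inter> acl L M E = dcl L M E" using prim unfolding primary_def X_def by simp
    moreover have "d ! i \<in> dcl L M (dcl L M X) \<inter> acl L M E" using d1 d2 by (rule IntI)
    ultimately show ?thesis by simp
  qed
  obtain \<sigma> where \<sigma>: "automorphism L M \<sigma>" "\<forall>x\<in>E. \<sigma> x = x" "map \<sigma> a = a'"
    using conj_R[OF mon sE ctp a a'] by blast
  have \<sigma>A: "\<sigma> \<in> AutE" using \<sigma> unfolding AutE_def by simp
  have "map \<sigma> d = d"
  proof (rule nth_equalityI)
    fix i assume "i < length (map \<sigma> d)"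
    hence i: "i < length d" by simp
    have "\<sigma> (d ! i) = d ! i" using dcl_fixed[OF dE[OF i] \<sigma>(1,2)] .
    thus "map \<sigma> d ! i = d ! i" using i by simp
  qed simp
  hence "map \<sigma> ` S a = S a" using dcode[OF \<sigma>(1)] by simp
  hence Saa: "S a' = S a" using Seq[OF \<sigma>A a(1)] \<sigma>(3) by simp
  have cS: "c \<in> S x \<longleftrightarrow> satT M x \<phi>" for x
  proof
    assume "c \<in> S x"
    then obtain \<tau> where \<tau>: "\<tau> \<in> AutE" "satT M x (mf \<tau> \<phi>)" "c = map \<tau> c" unfolding S_def by blast
    have "\<forall>y\<in>params \<phi>. \<tau> y = y" using map_fix_list[OF \<tau>(3)[symmetric]] c by blast
    hence "mf \<tau> \<phi> = \<phi>" by (rule mf_id)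
    thus "satT M x \<phi>" using \<tau>(2) by simp
  next
    assume "satT M x \<phi>"
    moreover have "id \<in> AutE" unfolding AutE_def using aut_id by simp
    moreover have "mf id \<phi> = \<phi>" by (rule mf_id) simp
    ultimately have "\<exists>\<tau>. map id c = map \<tau> c \<and> \<tau> \<in> AutE \<and> satT M x (mf \<tau> \<phi>)"
      by (intro exI[of _ id]) simp
    hence "map id c \<in> S x" unfolding S_def by simp
    thus "c \<in> S x" by simp
  qed
  show ?thesis using cS[of a'] cS[of a] Saa by simp
qed

lemma primary_st:
  fixes L :: "('f,'r) lang" and M :: "('f,'r,'a) struc" and \<kappa> :: "'k rel"
  assumes mon: "monster L M \<kappa>" and fs: "FS L M" and sE: "small \<kappa> E" and ctp: "ctype L M E n p"
    and a: "length a = n" "realizes M a p"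
    and prim: "primary L M E (dcl L M (E \<union> set a))"
  shows "acl_stationary L M E n p"
proof -
  have pL: "\<forall>\<phi>\<in>p. Lfm L E n \<phi>" using ctypeD(1)[OF ctp] .
  have EA: "E \<subseteq> acl L M E" by (rule sub_acl)
  define T where "T = tp L M (acl L M E) a"
  have T: "ctype L M (acl L M E) n T \<and> p \<subseteq> T"
    using ctype_tp[of L M "acl L M E" a] realizes_tp[OF a(2) _ EA] pL a(1) unfolding T_def by simp
  have uniq: "q = T" if q: "ctype L M (acl L M E) n q \<and> p \<subseteq> q" for q
  proof -
    have qc: "ctype L M (acl L M E) n q" and pq: "p \<subseteq> q" using q by auto
    have qT: "q \<subseteq> T"
    proof
      fix \<phi> assume \<phi>q: "\<phi> \<in> q"
      have L\<phi>: "Lfm L (acl L M E) n \<phi>" using ctypeD(1)[OF qc] \<phi>q by blast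
      define B where "B = E \<union> params \<phi>"
      have sB: "small \<kappa> B" unfolding B_def using small_Un_fin[OF monsterD(1,2)[OF mon] sE finite_params] .
      define q0 where "q0 = {\<psi> \<in> q. Lfm L B n \<psi>}"
      have q0L: "\<forall>\<psi>\<in>q0. Lfm L B n \<psi>" unfolding q0_def by blast
      have q0f: "finsat M n q0" unfolding finsat_def
      proof (intro allI impI)
        fix F assume F: "finite F \<and> F \<subseteq> q0"
        hence "F \<subseteq> q" unfolding q0_def by blast
        thus "\<exists>a. length a = n \<and> realizes M a F" using ctypeD(3)[OF qc] F by blast
      qed
      obtain a'' where a'': "length a'' = n" "realizes M a'' q0" using realize[OF mon sB q0L q0f] by blast
      have "p \<subseteq> q0"
      proof
        fix \<psi> assume "\<psi> \<in> p"
        moreover have "E \<subseteq> B" unfolding B_def by blast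
        ultimately show "\<psi> \<in> q0" using pq pL Lfm_mono unfolding q0_def by blast
      qed
      hence rp: "realizes M a'' p" using a''(2) unfolding realizes_def by blast
      have "Lfm L B n \<phi>" using L\<phi> unfolding Lfm_def B_def by auto
      hence "\<phi> \<in> q0" using \<phi>q unfolding q0_def by blast
      hence "satT M a'' \<phi>" using a''(2) unfolding realizes_def by blast
      hence "satT M a \<phi>" using code_claim[OF mon fs sE ctp a prim L\<phi> a''(1) rp] by simp
      thus "\<phi> \<in> T" unfolding T_def tp_def using L\<phi> a(1) by simp
    qed
    have "T \<subseteq> q"
    proof
      fix \<psi> assume \<psi>: "\<psi> \<in> T"
      hence L\<psi>: "Lfm L (acl L M E) n \<psi>" and s\<psi>: "satT M a \<psi>" unfolding T_def tp_def using a(1) by auto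
      show "\<psi> \<in> q"
      proof (rule ccontr)
        assume "\<psi> \<notin> q"
        hence "Neg \<psi> \<in> q" using ctypeD(2)[OF qc L\<psi>] by simp
        hence "Neg \<psi> \<in> T" using qT by blast
        hence "satT M a (Neg \<psi>)" unfolding T_def tp_def by simp
        thus False using s\<psi> by (simp add: satT_def)
      qed
    qed
    thus ?thesis using qT by simp
  qed
  show ?thesis unfolding acl_stationary_def
  proof (rule ex1I)
    show "ctype L M (acl L M E) n T \<and> p \<subseteq> T" using T .
    fix q assume "ctype L M (acl L M E) n q \<and> p \<subseteq> q"
    thus "q = T" by (rule uniq)
  qed
qed

theorem mainTheorem9:
  fixes L :: "('f,'r) lang" and M :: "('f,'r,'a) struc" and \<kappa> :: "'k rel"
    and E :: "'a set" and n :: nat and p :: "('f,'r,'a) fm set"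
  assumes "monster L M \<kappa>" and "FS L M" and "small \<kappa> E" and "ctype L M E n p"
  shows "(acl_stationary L M E n p \<longleftrightarrow>
            (\<exists>a. length a = n \<and> realizes M a p \<and> primary L M E (dcl L M (E \<union> set a))))
       \<and> ((\<exists>a. length a = n \<and> realizes M a p \<and> primary L M E (dcl L M (E \<union> set a))) \<longleftrightarrow>
            (\<forall>a. length a = n \<and> realizes M a p \<longrightarrow> primary L M E (dcl L M (E \<union> set a))))"
proof -
  note mon = assms(1) and fs = assms(2) and sE = assms(3) and ctp = assms(4)
  obtain a0 where a0: "length a0 = n" "realizes M a0 p" using monsterD(3)[OF mon sE ctp] by blast
  have i13: "\<forall>a. length a = n \<and> realizes M a p \<longrightarrow> primary L M E (dcl L M (E \<union> set a))"
    if st: "acl_stationary L M E n p"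
  proof (intro allI impI)
    fix a assume "length a = n \<and> realizes M a p"
    thus "primary L M E (dcl L M (E \<union> set a))" using st_primary[OF mon sE ctp st] by blast
  qed
  have i21: "acl_stationary L M E n p"
    if ex: "\<exists>a. length a = n \<and> realizes M a p \<and> primary L M E (dcl L M (E \<union> set a))"
  proof -
    obtain a where "length a = n" "realizes M a p" "primary L M E (dcl L M (E \<union> set a))" using ex by blast
    thus ?thesis using primary_st[OF mon fs sE ctp] by blast
  qed
  have i32: "\<exists>a. length a = n \<and> realizes M a p \<and> primary L M E (dcl L M (E \<union> set a))"
    if "\<forall>a. length a = n \<and> realizes M a p \<longrightarrow> primary L M E (dcl L M (E \<union> set a))"
    using that a0 by blast
  show ?thesis using i13 i21 i32 by blast
qed

end
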